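(* Let $k$ be an algebraically closed field of characteristic zero and let $X\subset\mathbb P^n$ be a chain of closed subvarieties $X_1,\dots,X_\ell$ with saturated ideal $I_X=\bigcap_i I_{X_i}\subset k[x_0,\dots,x_n]$, such that for some integers $n_0=0<n_1<\cdots<n_\ell=n$ one has $X_i\subset\{x_0=\cdots=x_{n_{i-1}-1}=0,\ x_{n_i+1}=\cdots=x_n=0\}$ for all $i$. Let $\rho:\mathbb G_m\to\mathrm{GL}_{n+1}$ be a one-parameter subgroup diagonalized by $x_0,\dots,x_n$ with weights $(r_0,\dots,r_n)$, and let $\rho_i$ be the restriction of $\rho$ to $\mathrm{GL}(kx_{n_{i-1}}+\cdots+kx_{n_i})$. Regard $X_i$ as the subvariety of $\mathbb P^{n_i-n_{i-1}}$ defined by $I_{X_i}\cap k[x_{n_{i-1}},\dots,x_{n_i}]$. Let $P(m)$ be the Hilbert polynomial of $I_X$ and $P_i(m)$ the Hilbert polynomial of $I_{X_i}\cap k[x_{n_{i-1}},\dots,x_{n_i}]$ as an ideal of $k[x_{n_{i-1}},\dots,x_{n_i}]$. Then for $m$ as below, \[ \mu([X]_m^\star,\rho)=\sum_{i=1}^\ell\mu([X_i]_m^\star,\rho_i)-\sum_{i=1}^\ell\frac{mP_i(m)}{n_i-n_{i-1}+1}\sum_{k=n_{i-1}}^{n_i}r_k+\frac{mP(m)}{n+1}\sum_{i=0}^n r_i+m\sum_{i=1}^{\ell-1}r_{n_i}. \]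
   Context: A chain of subvarieties means $X=\bigcup_iX_i$ and $X_i\cap X_j\neq\emptyset$ iff $|i-j|=1$. Here $m$ is a positive integer at least the Castelnuovo–Mumford regularity of all ideals involved, so that Hilbert points are defined and the dimension of the degree-$m$ part of each quotient ring equals the value of its Hilbert polynomial at $m$. For a homogeneous ideal $J\subset k[y_0,\dots,y_N]$ defining $Y\subset\mathbb P^N$ with Hilbert polynomial $P_Y$, and a one-parameter subgroup $\rho$ diagonal in $y_0,\dots,y_N$ with weights $(r_0,\dots,r_N)$, the Hilbert–Mumford index of the $m$th dual Hilbert point $[Y]_m^\star=[S_m\to S_m/J_m]$ is given by $\mu([Y]_m^\star,\rho)=-\sum_{x^\alpha}\mathrm{wt}_\rho(x^\alpha)+\frac{mP_Y(m)}{N+1}\sum_{i=0}^N r_i$, the sum over degree-$m$ monomials $x^\alpha$ not in $\mathrm{in}_{\prec_\rho}(J)$, where $\mathrm{wt}_\rho(x^\alpha)=\sum\alpha_i r_i$ and $\prec_\rho$ is the $\rho$-weighted order (monomials compared first by $\rho$-weight, ties broken by a fixed monomial order), used consistently for all ideals and restricted to the relevant subrings. *)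

theory Defs
  imports "HOL-Library.Poly_Mapping" "HOL-Computational_Algebra.Polynomial"
begin

text \<open>Multivariate polynomials over a field 'k in the variables x_0, x_1, ...:
  finitely supported maps from exponent vectors (nat =>0 nat) to coefficients.\<close>
type_synonym 'k mpoly = "(nat \<Rightarrow>\<^sub>0 nat) \<Rightarrow>\<^sub>0 'k"

definition alg_closed :: "'k::field itself \<Rightarrow> bool" where
  "alg_closed _ \<longleftrightarrow> (\<forall>p :: 'k poly. degree p > 0 \<longrightarrow> (\<exists>x. poly p x = 0))"

definition mdeg :: "(nat \<Rightarrow>\<^sub>0 nat) \<Rightarrow> nat" where
  "mdeg \<alpha> = (\<Sum>i\<in>Poly_Mapping.keys \<alpha>. Poly_Mapping.lookup \<alpha> i)"

definition in_vars :: "nat set \<Rightarrow> 'k::zero mpoly \<Rightarrow> bool" where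
  "in_vars V f \<longleftrightarrow> (\<forall>\<alpha>\<in>Poly_Mapping.keys f. Poly_Mapping.keys \<alpha> \<subseteq> V)"

definition homog :: "nat \<Rightarrow> 'k::zero mpoly \<Rightarrow> bool" where
  "homog t f \<longleftrightarrow> (\<forall>\<alpha>\<in>Poly_Mapping.keys f. mdeg \<alpha> = t)"

definition deg_part :: "nat set \<Rightarrow> nat \<Rightarrow> 'k::zero mpoly set" where
  "deg_part V t = {f. in_vars V f \<and> homog t f}"

definition mscale :: "'k::field \<Rightarrow> 'k mpoly \<Rightarrow> 'k mpoly" where
  "mscale c f = Poly_Mapping.map (\<lambda>a. c * a) f"

definition kdim :: "'k::field mpoly set \<Rightarrow> nat" where
  "kdim W = vector_space.dim (mscale :: 'k \<Rightarrow> 'k mpoly \<Rightarrow> 'k mpoly) W"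

definition hilb_fun :: "nat set \<Rightarrow> 'k::field mpoly set \<Rightarrow> nat \<Rightarrow> nat" where
  "hilb_fun V J t = kdim (deg_part V t :: 'k mpoly set) - kdim (deg_part V t \<inter> J)"

definition is_hilbert_poly :: "nat set \<Rightarrow> 'k::field mpoly set \<Rightarrow> rat poly \<Rightarrow> bool" where
  "is_hilbert_poly V J P \<longleftrightarrow> (\<exists>t0. \<forall>t\<ge>t0. of_nat (hilb_fun V J t) = poly P (of_nat t))"

definition evalp :: "'k::comm_ring_1 mpoly \<Rightarrow> (nat \<Rightarrow> 'k) \<Rightarrow> 'k" where
  "evalp f v = (\<Sum>\<alpha>\<in>Poly_Mapping.keys f. Poly_Mapping.lookup f \<alpha> * (\<Prod>i\<in>Poly_Mapping.keys \<alpha>. v i ^ Poly_Mapping.lookup \<alpha> i))"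

text \<open>Points of P^n, represented by their (nonzero) affine cones in k^{n+1}:
  subsets of projective space are represented as scaling-invariant sets of nonzero vectors.\<close>
definition proj_pts :: "nat \<Rightarrow> (nat \<Rightarrow> 'k::zero) set" where
  "proj_pts n = {v. v \<noteq> (\<lambda>_. 0) \<and> (\<forall>j>n. v j = 0)}"

definition zero_set :: "nat \<Rightarrow> 'k::comm_ring_1 mpoly set \<Rightarrow> (nat \<Rightarrow> 'k) set" where
  "zero_set n F = {v\<in>proj_pts n. \<forall>f\<in>F. evalp f v = 0}"

definition proj_closed :: "nat \<Rightarrow> (nat \<Rightarrow> 'k::comm_ring_1) set \<Rightarrow> bool" where
  "proj_closed n X \<longleftrightarrow> (\<exists>F. (\<forall>f\<in>F. in_vars {0..n} f \<and> (\<exists>t. homog t f)) \<and> X = zero_set n F)"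

definition proj_subvariety :: "nat \<Rightarrow> (nat \<Rightarrow> 'k::comm_ring_1) set \<Rightarrow> bool" where
  "proj_subvariety n X \<longleftrightarrow> proj_closed n X \<and> X \<noteq> {} \<and>
     (\<forall>A B. proj_closed n A \<and> proj_closed n B \<and> X = A \<union> B \<longrightarrow> X = A \<or> X = B)"

definition van_ideal :: "nat \<Rightarrow> (nat \<Rightarrow> 'k::comm_ring_1) set \<Rightarrow> 'k mpoly set" where
  "van_ideal n X = {f. in_vars {0..n} f \<and> (\<forall>v\<in>X. evalp f v = 0)}"

definition monomial_order :: "((nat \<Rightarrow>\<^sub>0 nat) \<Rightarrow> (nat \<Rightarrow>\<^sub>0 nat) \<Rightarrow> bool) \<Rightarrow> bool" where
  "monomial_order lt \<longleftrightarrow>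
     (\<forall>a. \<not> lt a a) \<and> (\<forall>a b c. lt a b \<longrightarrow> lt b c \<longrightarrow> lt a c) \<and>
     (\<forall>a b. lt a b \<or> a = b \<or> lt b a) \<and> wf {(a, b). lt a b} \<and>
     (\<forall>a b c. lt a b \<longrightarrow> lt (a + c) (b + c))"

definition wt :: "(nat \<Rightarrow> int) \<Rightarrow> (nat \<Rightarrow>\<^sub>0 nat) \<Rightarrow> int" where
  "wt r \<alpha> = (\<Sum>i\<in>Poly_Mapping.keys \<alpha>. int (Poly_Mapping.lookup \<alpha> i) * r i)"

definition wlt :: "(nat \<Rightarrow> int) \<Rightarrow> ((nat \<Rightarrow>\<^sub>0 nat) \<Rightarrow> (nat \<Rightarrow>\<^sub>0 nat) \<Rightarrow> bool)
                   \<Rightarrow> (nat \<Rightarrow>\<^sub>0 nat) \<Rightarrow> (nat \<Rightarrow>\<^sub>0 nat) \<Rightarrow> bool" where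
  "wlt r lt \<alpha> \<beta> \<longleftrightarrow> wt r \<alpha> < wt r \<beta> \<or> (wt r \<alpha> = wt r \<beta> \<and> lt \<alpha> \<beta>)"

definition lead_exp :: "(nat \<Rightarrow> int) \<Rightarrow> ((nat \<Rightarrow>\<^sub>0 nat) \<Rightarrow> (nat \<Rightarrow>\<^sub>0 nat) \<Rightarrow> bool)
                        \<Rightarrow> 'k::zero mpoly \<Rightarrow> (nat \<Rightarrow>\<^sub>0 nat)" where
  "lead_exp r lt f = (THE \<alpha>. \<alpha> \<in> Poly_Mapping.keys f \<and> (\<forall>\<beta>\<in>Poly_Mapping.keys f. \<beta> \<noteq> \<alpha> \<longrightarrow> wlt r lt \<beta> \<alpha>))"

definition init_mons :: "(nat \<Rightarrow> int) \<Rightarrow> ((nat \<Rightarrow>\<^sub>0 nat) \<Rightarrow> (nat \<Rightarrow>\<^sub>0 nat) \<Rightarrow> bool)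
                         \<Rightarrow> 'k::zero mpoly set \<Rightarrow> (nat \<Rightarrow>\<^sub>0 nat) set" where
  "init_mons r lt J = {lead_exp r lt f + \<gamma> | f \<gamma>. f \<in> J \<and> f \<noteq> 0}"

definition hm_index :: "nat set \<Rightarrow> 'k::zero mpoly set \<Rightarrow> rat poly \<Rightarrow> (nat \<Rightarrow> int)
      \<Rightarrow> ((nat \<Rightarrow>\<^sub>0 nat) \<Rightarrow> (nat \<Rightarrow>\<^sub>0 nat) \<Rightarrow> bool) \<Rightarrow> nat \<Rightarrow> rat" where
  "hm_index V J P r lt m =
     - (\<Sum>\<alpha>\<in>{\<alpha>. mdeg \<alpha> = m \<and> Poly_Mapping.keys \<alpha> \<subseteq> V \<and> \<alpha> \<notin> init_mons r lt J}. of_int (wt r \<alpha>))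
     + of_nat m * poly P (of_nat m) / of_nat (card V) * of_int (\<Sum>i\<in>V. r i)"

end

theory Submission
  imports Defs "HOL-Library.FuncSet"
begin


lemma wlt_irrefl: "monomial_order lt \<Longrightarrow> \<not> wlt r lt a a"
  by (auto simp: monomial_order_def wlt_def)

lemma wlt_trans: "monomial_order lt \<Longrightarrow> wlt r lt a b \<Longrightarrow> wlt r lt b c \<Longrightarrow> wlt r lt a c"
proof -
  assume mo: "monomial_order lt"
  then have t: "\<And>a b c. lt a b \<Longrightarrow> lt b c \<Longrightarrow> lt a c" by (simp add: monomial_order_def)
  assume "wlt r lt a b" "wlt r lt b c"
  then show "wlt r lt a c" unfolding wlt_def using t by fastforce
qed

lemma wlt_total: "monomial_order lt \<Longrightarrow> a \<noteq> b \<Longrightarrow> wlt r lt a b \<or> wlt r lt b a"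
proof -
  assume mo: "monomial_order lt" and ne: "a \<noteq> b"
  then have t: "lt a b \<or> lt b a" unfolding monomial_order_def by blast
  show "wlt r lt a b \<or> wlt r lt b a" unfolding wlt_def using t by linarith
qed

lemma wlt_asym: "monomial_order lt \<Longrightarrow> wlt r lt a b \<Longrightarrow> \<not> wlt r lt b a"
  using wlt_trans wlt_irrefl by blast

lemma max_exists:
  assumes mo: "monomial_order lt" and "finite K" "K \<noteq> {}"
  shows "\<exists>\<alpha>\<in>K. \<forall>\<beta>\<in>K. \<beta> \<noteq> \<alpha> \<longrightarrow> wlt r lt \<beta> \<alpha>"
  using assms(2,3)
proof (induction K rule: finite_ne_induct)
  case (singleton x) then show ?case by auto
next
  case (insert x F)
  then obtain a where a: "a \<in> F" "\<forall>\<beta>\<in>F. \<beta> \<noteq> a \<longrightarrow> wlt r lt \<beta> a" by blast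
  show ?case
  proof (cases "wlt r lt a x")
    case True
    have "\<forall>\<beta>\<in>insert x F. \<beta> \<noteq> x \<longrightarrow> wlt r lt \<beta> x"
    proof (intro ballI impI)
      fix \<beta> assume "\<beta> \<in> insert x F" "\<beta> \<noteq> x"
      then have "\<beta> \<in> F" by simp
      show "wlt r lt \<beta> x"
      proof (cases "\<beta> = a")
        case True then show ?thesis using \<open>wlt r lt a x\<close> by simp
      next
        case False then show ?thesis using a(2) \<open>\<beta> \<in> F\<close> \<open>wlt r lt a x\<close> wlt_trans[OF mo] by blast
      qed
    qed
    then show ?thesis by blast
  next
    case False
    then have "wlt r lt x a" using wlt_total[OF mo, of x a] insert(3) a(1) by blast
    then have "\<forall>\<beta>\<in>insert x F. \<beta> \<noteq> a \<longrightarrow> wlt r lt \<beta> a" using a(2) by blast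
    then show ?thesis using a(1) by blast
  qed
qed

lemma lead_exp_eqI:
  assumes mo: "monomial_order lt" and a: "a \<in> Poly_Mapping.keys f" "\<forall>\<beta>\<in>Poly_Mapping.keys f. \<beta> \<noteq> a \<longrightarrow> wlt r lt \<beta> a"
  shows "lead_exp r lt f = a"
  unfolding lead_exp_def
proof (rule the_equality)
  show "a \<in> Poly_Mapping.keys f \<and> (\<forall>\<beta>\<in>Poly_Mapping.keys f. \<beta> \<noteq> a \<longrightarrow> wlt r lt \<beta> a)" using a by blast
next
  fix b assume b: "b \<in> Poly_Mapping.keys f \<and> (\<forall>\<beta>\<in>Poly_Mapping.keys f. \<beta> \<noteq> b \<longrightarrow> wlt r lt \<beta> b)"
  show "b = a"
  proof (rule ccontr)
    assume "b \<noteq> a"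
    then have "wlt r lt a b" "wlt r lt b a" using a b by auto
    then show False using wlt_asym[OF mo] by blast
  qed
qed

lemma lead_exp_prop:
  assumes mo: "monomial_order lt" and "f \<noteq> 0"
  shows "lead_exp r lt f \<in> Poly_Mapping.keys f \<and>
    (\<forall>\<beta>\<in>Poly_Mapping.keys f. \<beta> \<noteq> lead_exp r lt f \<longrightarrow> wlt r lt \<beta> (lead_exp r lt f))"
proof -
  have "Poly_Mapping.keys f \<noteq> {}" using assms(2) by (simp add: keys_eq_empty)
  then obtain a where a: "a \<in> Poly_Mapping.keys f" "\<forall>\<beta>\<in>Poly_Mapping.keys f. \<beta> \<noteq> a \<longrightarrow> wlt r lt \<beta> a"
    using max_exists[OF mo, of "Poly_Mapping.keys f" r] by auto
  have "lead_exp r lt f = a" by (rule lead_exp_eqI[OF mo a])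
  then show ?thesis using a by simp
qed

lemma evalp_scale:
  assumes "homog d h"
  shows "evalp h (\<lambda>j. a * v j) = a ^ d * evalp h v"
proof -
  have "evalp h (\<lambda>j. a * v j) = (\<Sum>\<alpha>\<in>Poly_Mapping.keys h. Poly_Mapping.lookup h \<alpha> *
      (a ^ d * (\<Prod>i\<in>Poly_Mapping.keys \<alpha>. v i ^ Poly_Mapping.lookup \<alpha> i)))"
    unfolding evalp_def
  proof (rule sum.cong[OF refl])
    fix \<alpha> assume "\<alpha> \<in> Poly_Mapping.keys h"
    then have "mdeg \<alpha> = d" using assms by (simp add: homog_def)
    then show "Poly_Mapping.lookup h \<alpha> * (\<Prod>i\<in>Poly_Mapping.keys \<alpha>. (a * v i) ^ Poly_Mapping.lookup \<alpha> i) =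
         Poly_Mapping.lookup h \<alpha> * (a ^ d * (\<Prod>i\<in>Poly_Mapping.keys \<alpha>. v i ^ Poly_Mapping.lookup \<alpha> i))"
      by (simp add: power_mult_distrib prod.distrib mdeg_def flip: power_sum)
  qed
  also have "\<dots> = a ^ d * evalp h v"
    by (simp add: evalp_def sum_distrib_left mult_ac)
  finally show ?thesis .
qed

lemma scale_in_zero_set:
  fixes X :: "(nat \<Rightarrow> 'k::field) set"
  assumes "proj_closed n X" "v \<in> X" "a \<noteq> 0"
  shows "(\<lambda>j. a * v j) \<in> X"
proof -
  obtain F where F: "\<forall>f\<in>F. in_vars {0..n} f \<and> (\<exists>t. homog t f)" "X = zero_set n F"
    using assms(1) by (auto simp: proj_closed_def)
  have v: "v \<in> proj_pts n" "\<forall>f\<in>F. evalp f v = 0" using assms(2) F(2) by (auto simp: zero_set_def)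
  have "(\<lambda>j. a * v j) \<in> proj_pts n"
  proof -
    obtain j where "v j \<noteq> 0" using v(1) by (auto simp: proj_pts_def)
    then have "(\<lambda>j. a * v j) \<noteq> (\<lambda>_. 0)" using assms(3) by (metis mult_eq_0_iff)
    then show ?thesis using v(1) by (auto simp: proj_pts_def)
  qed
  moreover have "\<forall>f\<in>F. evalp f (\<lambda>j. a * v j) = 0"
    using F(1) v(2) evalp_scale by fastforce
  ultimately show ?thesis using F(2) by (simp add: zero_set_def)
qed

lemma keys_sub_single: "Poly_Mapping.keys \<alpha> \<subseteq> {c} \<Longrightarrow> \<alpha> = Poly_Mapping.single c (Poly_Mapping.lookup \<alpha> c)"
  by (rule poly_mapping_eqI) (metis in_keys_iff lookup_single_eq lookup_single_not_eq singletonD subsetD)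

lemma mdeg_single: "mdeg (Poly_Mapping.single c k) = k"
  by (simp add: mdeg_def)

lemma keys_sub_single_mdeg: "Poly_Mapping.keys \<alpha> \<subseteq> {c} \<Longrightarrow> mdeg \<alpha> = m \<Longrightarrow> \<alpha> = Poly_Mapping.single c m"
  by (metis keys_sub_single mdeg_single)

definition ept :: "nat \<Rightarrow> 'k::zero \<Rightarrow> nat \<Rightarrow> 'k" where
  "ept c t = (\<lambda>j. if j = c then t else 0)"

lemma pure_coeff_zero:
  fixes f :: "'k::field_char_0 mpoly"
  assumes "\<forall>t. t \<noteq> 0 \<longrightarrow> evalp f (ept c t) = 0"
  shows "Poly_Mapping.lookup f (Poly_Mapping.single c k) = 0"
proof -
  define p where "p = (\<Sum>\<alpha>\<in>Poly_Mapping.keys f. if Poly_Mapping.keys \<alpha> \<subseteq> {c}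
      then monom (Poly_Mapping.lookup f \<alpha>) (Poly_Mapping.lookup \<alpha> c) else 0)"
  have ev: "evalp f (ept c t) = poly p t" for t
    unfolding evalp_def p_def poly_sum
  proof (rule sum.cong[OF refl])
    fix \<alpha> assume "\<alpha> \<in> Poly_Mapping.keys f"
    show "Poly_Mapping.lookup f \<alpha> * (\<Prod>i\<in>Poly_Mapping.keys \<alpha>. ept c t i ^ Poly_Mapping.lookup \<alpha> i) =
      poly (if Poly_Mapping.keys \<alpha> \<subseteq> {c} then monom (Poly_Mapping.lookup f \<alpha>) (Poly_Mapping.lookup \<alpha> c) else 0) t"
    proof (cases "Poly_Mapping.keys \<alpha> \<subseteq> {c}")
      case True
      then have "Poly_Mapping.keys \<alpha> = {} \<or> Poly_Mapping.keys \<alpha> = {c}" by blast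
      then show ?thesis
      proof
        assume k: "Poly_Mapping.keys \<alpha> = {}"
        then have "Poly_Mapping.lookup \<alpha> c = 0" by (simp add: in_keys_iff[symmetric])
        then show ?thesis using k True by (simp add: poly_monom)
      next
        assume k: "Poly_Mapping.keys \<alpha> = {c}"
        then show ?thesis using True by (simp add: poly_monom ept_def)
      qed
    next
      case False
      then obtain i where "i \<in> Poly_Mapping.keys \<alpha>" "i \<noteq> c" by blast
      then have "(\<Prod>i\<in>Poly_Mapping.keys \<alpha>. ept c t i ^ Poly_Mapping.lookup \<alpha> i) = 0"
        by (intro prod_zero) (auto simp: ept_def in_keys_iff intro!: bexI[of _ i])
      then show ?thesis using False by simp
    qed
  qed
  have "p = 0"
  proof (rule ccontr)
    assume "p \<noteq> 0"
    then have "finite {x. poly p x = 0}" by (rule poly_roots_finite)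
    moreover have "{x::'k. x \<noteq> 0} \<subseteq> {x. poly p x = 0}" using assms ev by auto
    moreover have "infinite {x::'k. x \<noteq> 0}"
    proof
      assume "finite {x::'k. x \<noteq> 0}"
      then have "finite (insert 0 {x::'k. x \<noteq> 0})" by simp
      moreover have "insert 0 {x::'k. x \<noteq> 0} = UNIV" by auto
      ultimately show False using infinite_UNIV_char_0[where 'a='k] by simp
    qed
    ultimately show False using finite_subset by blast
  qed
  then have "coeff p k = 0" by simp
  moreover have "coeff p k = (\<Sum>\<alpha>\<in>Poly_Mapping.keys f. if \<alpha> = Poly_Mapping.single c k then Poly_Mapping.lookup f \<alpha> else 0)"
    unfolding p_def coeff_sum
  proof (rule sum.cong[OF refl])
    fix \<alpha>
    show "coeff (if Poly_Mapping.keys \<alpha> \<subseteq> {c} then monom (Poly_Mapping.lookup f \<alpha>) (Poly_Mapping.lookup \<alpha> c) else 0) k =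
         (if \<alpha> = Poly_Mapping.single c k then Poly_Mapping.lookup f \<alpha> else 0)"
    proof (cases "Poly_Mapping.keys \<alpha> \<subseteq> {c}")
      case True
      note e = keys_sub_single[OF True]
      have "(\<alpha> = Poly_Mapping.single c k) = (Poly_Mapping.lookup \<alpha> c = k)"
        by (metis e lookup_single_eq)
      then show ?thesis using True by (simp add: coeff_monom)
    next
      case False
      have "Poly_Mapping.keys (Poly_Mapping.single c k) \<subseteq> {c}" by simp
      then have "\<alpha> \<noteq> Poly_Mapping.single c k" using False by blast
      then show ?thesis using False by simp
    qed
  qed
  moreover have "\<dots> = Poly_Mapping.lookup f (Poly_Mapping.single c k)"
    by (simp add: sum.delta in_keys_iff)
  ultimately show ?thesis by simp
qed

lemma vanish_near_pure:
  fixes f :: "'k::field_char_0 mpoly"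
  assumes "\<forall>t. t \<noteq> 0 \<longrightarrow> evalp f (ept c t) = 0" and "in_vars V f"
    and "\<forall>j\<in>V. j \<noteq> c \<longrightarrow> v j = 0"
  shows "evalp f v = 0"
  unfolding evalp_def
proof (rule sum.neutral, rule ballI)
  fix \<alpha> assume a: "\<alpha> \<in> Poly_Mapping.keys f"
  show "Poly_Mapping.lookup f \<alpha> * (\<Prod>i\<in>Poly_Mapping.keys \<alpha>. v i ^ Poly_Mapping.lookup \<alpha> i) = 0"
  proof (cases "Poly_Mapping.keys \<alpha> \<subseteq> {c}")
    case True
    have e: "\<alpha> = Poly_Mapping.single c (Poly_Mapping.lookup \<alpha> c)" by (rule keys_sub_single[OF True])
    have "Poly_Mapping.lookup f \<alpha> = 0"
      by (subst e) (rule pure_coeff_zero[OF assms(1)])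
    then show ?thesis by simp
  next
    case False
    then obtain i where i: "i \<in> Poly_Mapping.keys \<alpha>" "i \<noteq> c" by blast
    have "i \<in> V" using assms(2) a i(1) by (auto simp: in_vars_def)
    then have "(\<Prod>i\<in>Poly_Mapping.keys \<alpha>. v i ^ Poly_Mapping.lookup \<alpha> i) = 0"
      using i assms(3) by (intro prod_zero) (auto simp: in_keys_iff intro!: bexI[of _ i])
    then show ?thesis by simp
  qed
qed



lemma lookup_le_mdeg: "Poly_Mapping.lookup \<alpha> i \<le> mdeg \<alpha>"
proof (cases "i \<in> Poly_Mapping.keys \<alpha>")
  case True then show ?thesis unfolding mdeg_def by (intro member_le_sum) auto
next
  case False then show ?thesis by (simp add: in_keys_iff)
qed

lemma finite_mons: "finite V \<Longrightarrow> finite {\<alpha>. mdeg \<alpha> = m \<and> Poly_Mapping.keys \<alpha> \<subseteq> V \<and> Q \<alpha>}"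
proof -
  assume fV: "finite V"
  let ?A = "{\<alpha>. mdeg \<alpha> = m \<and> Poly_Mapping.keys \<alpha> \<subseteq> V \<and> Q \<alpha>}"
  let ?h = "\<lambda>\<alpha>. restrict (Poly_Mapping.lookup \<alpha>) V"
  have "inj_on ?h ?A"
  proof (rule inj_onI)
    fix a b assume a: "a \<in> ?A" and b: "b \<in> ?A" and e: "?h a = ?h b"
    show "a = b"
    proof (rule poly_mapping_eqI)
      fix i show "Poly_Mapping.lookup a i = Poly_Mapping.lookup b i"
      proof (cases "i \<in> V")
        case True then show ?thesis using e by (metis restrict_apply')
      next
        case False
        then have "i \<notin> Poly_Mapping.keys a" "i \<notin> Poly_Mapping.keys b" using a b by auto
        then show ?thesis by (simp add: in_keys_iff)
      qed
    qed
  qed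
  moreover have "?h ` ?A \<subseteq> Pi\<^sub>E V (\<lambda>_. {0..m})"
    using lookup_le_mdeg by auto
  moreover have "finite (Pi\<^sub>E V (\<lambda>_. {0..m::nat}))" using fV by (intro finite_PiE) auto
  ultimately show ?thesis by (meson finite_imageD finite_subset)
qed

definition restr :: "nat set \<Rightarrow> 'k::zero mpoly \<Rightarrow> 'k mpoly" where
  "restr V g = Poly_Mapping.mapp (\<lambda>\<alpha> c. if Poly_Mapping.keys \<alpha> \<subseteq> V then c else 0) g"

lemma lookup_restr: "Poly_Mapping.lookup (restr V g) \<alpha> = (if Poly_Mapping.keys \<alpha> \<subseteq> V then Poly_Mapping.lookup g \<alpha> else 0)"
  by (simp add: restr_def lookup_mapp when_def in_keys_iff)

lemma keys_restr: "Poly_Mapping.keys (restr V g) = {\<alpha>\<in>Poly_Mapping.keys g. Poly_Mapping.keys \<alpha> \<subseteq> V}"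
  by (rule set_eqI, subst in_keys_iff) (simp add: lookup_restr lookup_not_eq_zero_eq_in_keys)

lemma restr_lead:
  assumes mo: "monomial_order lt" and g: "g \<noteq> 0" and sub: "Poly_Mapping.keys (lead_exp r lt g) \<subseteq> V"
  shows "restr V g \<noteq> 0" "lead_exp r lt (restr V g) = lead_exp r lt g"
proof -
  note L = lead_exp_prop[OF mo g, of r]
  have "lead_exp r lt g \<in> Poly_Mapping.keys (restr V g)" using L sub by (simp add: keys_restr)
  then show "restr V g \<noteq> 0" by auto
  show "lead_exp r lt (restr V g) = lead_exp r lt g"
    by (rule lead_exp_eqI[OF mo]) (use L sub in \<open>auto simp: keys_restr\<close>)
qed

lemma in_vars_restr: "in_vars V (restr V g)"
  by (simp add: in_vars_def keys_restr)

lemma in_vars_restr2: "in_vars W g \<Longrightarrow> in_vars W (restr V g)"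
  by (simp add: in_vars_def keys_restr)

lemma evalp_restr:
  assumes "\<forall>\<alpha>\<in>Poly_Mapping.keys g. \<forall>j\<in>Poly_Mapping.keys \<alpha>. j \<notin> V \<longrightarrow> v j = 0"
  shows "evalp (restr V g) v = evalp g v"
proof -
  have "evalp (restr V g) v = (\<Sum>\<alpha>\<in>Poly_Mapping.keys (restr V g). Poly_Mapping.lookup g \<alpha> * (\<Prod>i\<in>Poly_Mapping.keys \<alpha>. v i ^ Poly_Mapping.lookup \<alpha> i))"
    unfolding evalp_def by (rule sum.cong) (auto simp: keys_restr lookup_restr)
  also have "\<dots> = evalp g v"
    unfolding evalp_def
  proof (rule sum.mono_neutral_left)
    show "finite (Poly_Mapping.keys g)" by simp
    show "Poly_Mapping.keys (restr V g) \<subseteq> Poly_Mapping.keys g" by (auto simp: keys_restr)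
    show "\<forall>\<alpha>\<in>Poly_Mapping.keys g - Poly_Mapping.keys (restr V g).
        Poly_Mapping.lookup g \<alpha> * (\<Prod>i\<in>Poly_Mapping.keys \<alpha>. v i ^ Poly_Mapping.lookup \<alpha> i) = 0"
    proof
      fix \<alpha> assume a: "\<alpha> \<in> Poly_Mapping.keys g - Poly_Mapping.keys (restr V g)"
      then obtain j where j: "j \<in> Poly_Mapping.keys \<alpha>" "j \<notin> V" by (auto simp: keys_restr)
      then have "v j = 0" using assms a by auto
      moreover have "Poly_Mapping.lookup \<alpha> j > 0" using j(1) by (simp add: in_keys_iff)
      ultimately have "v j ^ Poly_Mapping.lookup \<alpha> j = 0" by (simp add: zero_power)
      then have "(\<Prod>i\<in>Poly_Mapping.keys \<alpha>. v i ^ Poly_Mapping.lookup \<alpha> i) = 0"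
        using j by (intro prod_zero) auto
      then show "Poly_Mapping.lookup g \<alpha> * (\<Prod>i\<in>Poly_Mapping.keys \<alpha>. v i ^ Poly_Mapping.lookup \<alpha> i) = 0" by simp
    qed
  qed
  finally show ?thesis .
qed

lemma evalp_monom1: "evalp (Poly_Mapping.single \<alpha> (1::'k::comm_ring_1)) v = (\<Prod>i\<in>Poly_Mapping.keys \<alpha>. v i ^ Poly_Mapping.lookup \<alpha> i)"
  by (simp add: evalp_def)

lemma lead_exp_monom1:
  assumes mo: "monomial_order lt"
  shows "lead_exp r lt (Poly_Mapping.single \<alpha> (1::'k::comm_ring_1)) = \<alpha>"
  by (rule lead_exp_eqI[OF mo]) auto

lemma keys_le_add: "Poly_Mapping.keys \<beta> \<subseteq> Poly_Mapping.keys (\<beta> + (\<gamma>::nat \<Rightarrow>\<^sub>0 nat))"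
  by (auto simp: in_keys_iff lookup_add)

lemma proj_closed_sub: "proj_closed n X \<Longrightarrow> X \<subseteq> proj_pts n"
  by (auto simp: proj_closed_def zero_set_def)

lemma wt_single: "wt r (Poly_Mapping.single c m) = int m * r c"
  by (simp add: wt_def)

lemma init_mons_mono: "J \<subseteq> J' \<Longrightarrow> init_mons r lt J \<subseteq> init_mons r lt J'"
  by (auto simp: init_mons_def)

lemma mdeg_pos_keys: "mdeg \<alpha> = m \<Longrightarrow> m > 0 \<Longrightarrow> Poly_Mapping.keys \<alpha> \<noteq> {}"
  by (auto simp: mdeg_def)

lemma shift_sum: "(\<Sum>i=1..(l::nat). if i = 1 then 0 else h (i - 1)) = (\<Sum>i=1..l - 1. (h i :: int))"
proof (induction l)
  case 0 then show ?case by simp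
next
  case (Suc l)
  show ?case
  proof (cases "l = 0")
    case True then show ?thesis by simp
  next
    case False
    then have "(\<Sum>i=1..Suc l. if i = 1 then 0 else h (i - 1)) = (\<Sum>i=1..l. if i = 1 then 0 else h (i - 1)) + h l"
      by simp
    also have "\<dots> = (\<Sum>i=1..l - 1. h i) + h l" using Suc by simp
    also have "\<dots> = (\<Sum>i=1..l. h i)" using False by (cases l) auto
    finally show ?thesis by simp
  qed
qed



theorem proposition1p6:
  fixes n l m :: nat
    and ns :: "nat \<Rightarrow> nat"
    and X :: "nat \<Rightarrow> (nat \<Rightarrow> 'k::field_char_0) set"
    and r :: "nat \<Rightarrow> int"
    and lt :: "(nat \<Rightarrow>\<^sub>0 nat) \<Rightarrow> (nat \<Rightarrow>\<^sub>0 nat) \<Rightarrow> bool"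
    and P :: "rat poly" and Ps :: "nat \<Rightarrow> rat poly"
  assumes k_closed: "alg_closed TYPE('k)"
    and l_pos: "l \<ge> 1"
    and ns0: "ns 0 = 0" and nsl: "ns l = n"
    and ns_mono: "\<forall>i<l. ns i < ns (Suc i)"
    and subvar: "\<forall>i\<in>{1..l}. proj_subvariety n (X i)"
    and chain: "\<forall>i\<in>{1..l}. \<forall>j\<in>{1..l}. i \<noteq> j \<longrightarrow>
                  (X i \<inter> X j \<noteq> {} \<longleftrightarrow> i = j + 1 \<or> j = i + 1)"
    and contained: "\<forall>i\<in>{1..l}. \<forall>v\<in>X i. \<forall>j\<le>n. j < ns (i - 1) \<or> ns i < j \<longrightarrow> v j = 0"
    and mono_ord: "monomial_order lt"
    and HP: "is_hilbert_poly {0..n} (\<Inter>i\<in>{1..l}. van_ideal n (X i)) P"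
    and HPi: "\<forall>i\<in>{1..l}. is_hilbert_poly {ns (i - 1)..ns i}
                 (van_ideal n (X i) \<inter> {f. in_vars {ns (i - 1)..ns i} f}) (Ps i)"
    and m_pos: "m > 0"
    and m_reg: "\<forall>t\<ge>m. of_nat (hilb_fun {0..n} (\<Inter>i\<in>{1..l}. van_ideal n (X i)) t)
                        = poly P (of_nat t)"
    and m_regi: "\<forall>i\<in>{1..l}. \<forall>t\<ge>m.
                   of_nat (hilb_fun {ns (i - 1)..ns i}
                     (van_ideal n (X i) \<inter> {f. in_vars {ns (i - 1)..ns i} f}) t)
                   = poly (Ps i) (of_nat t)"
  shows "hm_index {0..n} (\<Inter>i\<in>{1..l}. van_ideal n (X i)) P r lt m =
           (\<Sum>i=1..l. hm_index {ns (i - 1)..ns i}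
               (van_ideal n (X i) \<inter> {f. in_vars {ns (i - 1)..ns i} f}) (Ps i) r lt m)
         - (\<Sum>i=1..l. of_nat m * poly (Ps i) (of_nat m) / of_nat (ns i - ns (i - 1) + 1)
               * of_int (\<Sum>k=ns (i - 1)..ns i. r k))
         + of_nat m * poly P (of_nat m) / of_nat (n + 1) * of_int (\<Sum>i=0..n. r i)
         + of_nat m * of_int (\<Sum>i=1..l - 1. r (ns i))"
proof -
  define V where "V i = {ns (i - 1)..ns i}" for i
  define I where "I i = van_ideal n (X i) \<inter> {f. in_vars (V i) f}" for i
  define IX where "IX = (\<Inter>i\<in>{1..l}. van_ideal n (X i))"
  define S where "S = {\<alpha>. mdeg \<alpha> = m \<and> Poly_Mapping.keys \<alpha> \<subseteq> {0..n} \<and> \<alpha> \<notin> init_mons r lt IX}"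
  define Si where "Si i = {\<alpha>. mdeg \<alpha> = m \<and> Poly_Mapping.keys \<alpha> \<subseteq> V i \<and> \<alpha> \<notin> init_mons r lt (I i)}" for i
  define W where "W A = (\<Sum>\<alpha>\<in>A. wt r \<alpha>)" for A
  have cont: "v j = 0" if "i \<in> {1..l}" "v \<in> X i" "j \<le> n" "j < ns (i - 1) \<or> ns i < j" for i v j
    using bspec[OF bspec[OF contained that(1)] that(2)] that(3,4) by blast
  have monod: "ns i \<le> ns (i + d)" if "i + d \<le> l" for i d
    using that
  proof (induction d)
    case 0 then show ?case by simp
  next
    case (Suc d)
    then have "ns i \<le> ns (i + d)" by simp
    moreover have "ns (i + d) < ns (Suc (i + d))" using ns_mono Suc.prems by simp
    ultimately show ?case by simp
  qed
  have mono: "ns i \<le> ns j" if "i \<le> j" "j \<le> l" for i j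
    using monod[of i "j - i"] that by simp
  have smono: "ns i < ns j" if "i < j" "j \<le> l" for i j
  proof -
    have "ns i < ns (Suc i)" using ns_mono that by simp
    also have "\<dots> \<le> ns j" using mono that by simp
    finally show ?thesis .
  qed
  have nsle: "ns i \<le> n" if "i \<le> l" for i using mono[of i l] that nsl by simp
  have closed: "proj_closed n (X i)" if "i \<in> {1..l}" for i
    using subvar that by (simp add: proj_subvariety_def)
  have shared: "ept (ns k) t \<in> X k \<and> ept (ns k) t \<in> X (k + 1)" if k: "1 \<le> k" "k < l" and t: "t \<noteq> 0" for k t
  proof -
    have "X k \<inter> X (k + 1) \<noteq> {}" using chain k by auto
    then obtain v where v: "v \<in> X k" "v \<in> X (k + 1)" by blast
    have pp: "v \<in> proj_pts n" using proj_closed_sub[OF closed[of k]] v k by auto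
    have ve: "v = ept (ns k) (v (ns k))"
    proof
      fix j show "v j = ept (ns k) (v (ns k)) j"
      proof (cases "j = ns k")
        case True then show ?thesis by (simp add: ept_def)
      next
        case False
        have "v j = 0"
        proof (cases "j \<le> n")
          case True
          show ?thesis
          proof (cases "j < ns k")
            case True
            have "Suc k \<in> {1..l}" using k by simp
            then have "\<forall>j\<le>n. j < ns (Suc k - 1) \<or> ns (Suc k) < j \<longrightarrow> v j = 0"
              using bspec[OF bspec[OF contained \<open>Suc k \<in> {1..l}\<close>], of v] v(2) by simp
            then show ?thesis using True \<open>j \<le> n\<close> by simp
          next
            case False
            then have "ns k < j" using \<open>j \<noteq> ns k\<close> by simp
            then show ?thesis using cont[of k v j] k v(1) \<open>j \<le> n\<close> by auto
          qed
        next
          case False then show ?thesis using pp by (simp add: proj_pts_def)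
        qed
        then show ?thesis using False by (simp add: ept_def)
      qed
    qed
    have s: "v (ns k) \<noteq> 0"
    proof
      assume "v (ns k) = 0"
      then have "v = (\<lambda>_. 0)" using ve by (simp add: ept_def fun_eq_iff)
      then show False using pp by (simp add: proj_pts_def)
    qed
    have e: "ept (ns k) t = (\<lambda>j. (t / v (ns k)) * v j)"
      by (subst ve) (auto simp: ept_def fun_eq_iff s)
    have "t / v (ns k) \<noteq> 0" using s t by simp
    have "k \<in> {1..l}" "k + 1 \<in> {1..l}" using k by auto
    then show ?thesis unfolding e
      using scale_in_zero_set[OF closed[of k] v(1) \<open>t / v (ns k) \<noteq> 0\<close>]
        scale_in_zero_set[OF closed[of "k+1"] v(2) \<open>t / v (ns k) \<noteq> 0\<close>] by blast
  qed
  have IsubIX: "I k \<subseteq> IX" if k: "k \<in> {1..l}" for k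
  proof
    fix f assume f: "f \<in> I k"
    then have fk: "in_vars {0..n} f" "\<forall>v\<in>X k. evalp f v = 0" "in_vars (V k) f"
      by (auto simp: I_def van_ideal_def)
    have "f \<in> van_ideal n (X j)" if j: "j \<in> {1..l}" for j
    proof -
      have "evalp f v = 0" if v: "v \<in> X j" for v
      proof (cases "j = k")
        case True then show ?thesis using fk v by simp
      next
        case False
        show ?thesis
        proof (cases "k < j")
          case True
          have tt: "\<forall>t. t \<noteq> 0 \<longrightarrow> evalp f (ept (ns k) t) = 0"
            using shared[of k] True k j fk(2) by auto
          show ?thesis
          proof (rule vanish_near_pure[OF tt fk(3)], intro ballI impI)
            fix x assume x: "x \<in> V k" "x \<noteq> ns k"
            then have "x < ns k" by (simp add: V_def)
            moreover have "ns k \<le> ns (j - 1)" using mono True j by simp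
            moreover have "x \<le> n" using x(1) nsle[of k] k by (auto simp: V_def)
            ultimately show "v x = 0" using cont[of j v x] j v by linarith
          qed
        next
          case False
          then have jk: "j < k" using \<open>j \<noteq> k\<close> by simp
          have "ept (ns (k - 1)) t \<in> X k" if "t \<noteq> 0" for t
            using shared[of "k - 1" t] jk j k that by auto
          then have tt: "\<forall>t. t \<noteq> 0 \<longrightarrow> evalp f (ept (ns (k - 1)) t) = 0"
            using fk(2) by auto
          show ?thesis
          proof (rule vanish_near_pure[OF tt fk(3)], intro ballI impI)
            fix x assume x: "x \<in> V k" "x \<noteq> ns (k - 1)"
            then have "ns (k - 1) < x" by (simp add: V_def)
            moreover have "ns j \<le> ns (k - 1)" using mono jk k by simp
            moreover have "x \<le> n" using x(1) nsle[of k] k by (auto simp: V_def)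
            ultimately show "v x = 0" using cont[of j v x] j v by linarith
          qed
        qed
      qed
      then show ?thesis using fk(1) by (simp add: van_ideal_def)
    qed
    then show "f \<in> IX" by (simp add: IX_def)
  qed
  have F5: "\<alpha> \<in> init_mons r lt (I k)" if k: "k \<in> {1..l}" and a: "Poly_Mapping.keys \<alpha> \<subseteq> V k" "\<alpha> \<in> init_mons r lt IX" for k \<alpha>
  proof -
    obtain g \<gamma> where g: "\<alpha> = lead_exp r lt g + \<gamma>" "g \<in> IX" "g \<noteq> 0"
      using a(2) by (auto simp: init_mons_def)
    have sub: "Poly_Mapping.keys (lead_exp r lt g) \<subseteq> V k" using a(1) g(1) keys_le_add by blast
    note R = restr_lead[OF mono_ord g(3) sub]
    have gk: "g \<in> van_ideal n (X k)" using g(2) k by (simp add: IX_def)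
    then have gv: "in_vars {0..n} g" "\<forall>v\<in>X k. evalp g v = 0" by (auto simp: van_ideal_def)
    have "restr (V k) g \<in> I k"
    proof -
      have "evalp (restr (V k) g) v = 0" if v: "v \<in> X k" for v
      proof -
        have "\<forall>\<beta>\<in>Poly_Mapping.keys g. \<forall>j\<in>Poly_Mapping.keys \<beta>. j \<notin> V k \<longrightarrow> v j = 0"
        proof (intro ballI impI)
          fix \<beta> j assume "\<beta> \<in> Poly_Mapping.keys g" "j \<in> Poly_Mapping.keys \<beta>" "j \<notin> V k"
          moreover have "j \<le> n" using gv(1) calculation unfolding in_vars_def by (meson atLeastAtMost_iff subsetD)
          ultimately show "v j = 0" using cont[of k v j] k v by (auto simp: V_def)
        qed
        then show ?thesis using evalp_restr gv(2) v by metis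
      qed
      then show ?thesis using in_vars_restr in_vars_restr2[OF gv(1)]
        by (simp add: I_def van_ideal_def)
    qed
    then have "lead_exp r lt (restr (V k) g) + \<gamma> \<in> init_mons r lt (I k)"
      using R(1) unfolding init_mons_def by blast
    then show ?thesis using R(2) g(1) by simp
  qed
  have F6: "\<alpha> \<in> init_mons r lt IX" if a: "Poly_Mapping.keys \<alpha> \<subseteq> {0..n}" "\<forall>k\<in>{1..l}. \<not> Poly_Mapping.keys \<alpha> \<subseteq> V k" for \<alpha>
  proof -
    let ?f = "Poly_Mapping.single \<alpha> (1::'k)"
    have "?f \<in> van_ideal n (X k)" if k: "k \<in> {1..l}" for k
    proof -
      obtain j where j: "j \<in> Poly_Mapping.keys \<alpha>" "j \<notin> V k" using a k by blast
      have "evalp ?f v = 0" if v: "v \<in> X k" for v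
      proof -
        have "j \<le> n" using j a(1) by auto
        then have "v j = 0" using j cont[of k v j] k v by (auto simp: V_def)
        moreover have "Poly_Mapping.lookup \<alpha> j > 0" using j(1) by (simp add: in_keys_iff)
        ultimately have "v j ^ Poly_Mapping.lookup \<alpha> j = 0" by (simp add: zero_power)
        then show ?thesis unfolding evalp_monom1 using j by (intro prod_zero) auto
      qed
      moreover have "in_vars {0..n} ?f" using a(1) by (simp add: in_vars_def)
      ultimately show ?thesis by (simp add: van_ideal_def)
    qed
    then have "?f \<in> IX" by (simp add: IX_def)
    moreover have "?f \<noteq> 0" by (metis lookup_single_eq lookup_zero one_neq_zero)
    ultimately have "lead_exp r lt ?f + 0 \<in> init_mons r lt IX" unfolding init_mons_def by blast
    then show ?thesis by (simp add: lead_exp_monom1[OF mono_ord])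
  qed
  have F7: "Poly_Mapping.single c m \<notin> init_mons r lt (I k)"
    if k: "k \<in> {1..l}" and c: "\<forall>t. t \<noteq> 0 \<longrightarrow> ept c t \<in> X k" for k c
  proof
    assume "Poly_Mapping.single c m \<in> init_mons r lt (I k)"
    then obtain f \<gamma> where f: "Poly_Mapping.single c m = lead_exp r lt f + \<gamma>" "f \<in> I k" "f \<noteq> 0"
      by (auto simp: init_mons_def)
    let ?b = "lead_exp r lt f"
    have bk: "?b \<in> Poly_Mapping.keys f" using lead_exp_prop[OF mono_ord f(3)] by blast
    have "Poly_Mapping.keys ?b \<subseteq> {c}"
      using keys_le_add[of ?b \<gamma>] f(1)[symmetric] by (metis empty_subsetI insert_subsetI keys_single subset_iff)
    then have be: "?b = Poly_Mapping.single c (Poly_Mapping.lookup ?b c)" by (rule keys_sub_single)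
    have "\<forall>t. t \<noteq> 0 \<longrightarrow> evalp f (ept c t) = 0" using c f(2) by (auto simp: I_def van_ideal_def)
    then have "Poly_Mapping.lookup f ?b = 0" by (subst be) (rule pure_coeff_zero)
    then show False using bk by (simp add: in_keys_iff)
  qed
  have Vsub: "V i \<subseteq> {0..n}" if "i \<in> {1..l}" for i
    using nsle[of i] that by (auto simp: V_def)
  have finS: "finite (Si i)" for i
    unfolding Si_def by (rule finite_mons) (simp add: V_def)
  have D1: "S = (\<Union>i\<in>{1..l}. Si i)"
  proof (rule set_eqI, rule iffI)
    fix \<alpha> assume "\<alpha> \<in> S"
    then have a: "mdeg \<alpha> = m" "Poly_Mapping.keys \<alpha> \<subseteq> {0..n}" "\<alpha> \<notin> init_mons r lt IX" by (auto simp: S_def)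
    then obtain k where k: "k \<in> {1..l}" "Poly_Mapping.keys \<alpha> \<subseteq> V k" using F6 by blast
    have "\<alpha> \<notin> init_mons r lt (I k)" using a(3) init_mons_mono[OF IsubIX[OF k(1)]] by blast
    then show "\<alpha> \<in> (\<Union>i\<in>{1..l}. Si i)" using a k by (auto simp: Si_def)
  next
    fix \<alpha> assume "\<alpha> \<in> (\<Union>i\<in>{1..l}. Si i)"
    then obtain k where k: "k \<in> {1..l}" "\<alpha> \<in> Si k" by blast
    then have a: "mdeg \<alpha> = m" "Poly_Mapping.keys \<alpha> \<subseteq> V k" "\<alpha> \<notin> init_mons r lt (I k)" by (auto simp: Si_def)
    have "\<alpha> \<notin> init_mons r lt IX" using F5 k(1) a by blast
    then show "\<alpha> \<in> S" using a Vsub[OF k(1)] by (auto simp: S_def)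
  qed
  define p where "p i = Poly_Mapping.single (ns (i - 1)) m" for i
  have mne: "m \<noteq> 0" using m_pos by simp
  have pin: "p i \<in> Si i \<and> p i \<in> Si (i - 1)" if i: "i \<in> {2..l}" for i
  proof -
    have ep: "\<forall>t. t \<noteq> 0 \<longrightarrow> ept (ns (i - 1)) t \<in> X i" "\<forall>t. t \<noteq> 0 \<longrightarrow> ept (ns (i - 1)) t \<in> X (i - 1)"
      using shared[of "i - 1"] i by auto
    have i1: "i \<in> {1..l}" "i - 1 \<in> {1..l}" using i by auto
    have "p i \<notin> init_mons r lt (I i)" unfolding p_def by (rule F7[OF i1(1) ep(1)])
    moreover have "p i \<notin> init_mons r lt (I (i - 1))" unfolding p_def by (rule F7[OF i1(2) ep(2)])
    moreover have "Poly_Mapping.keys (p i) \<subseteq> V i" "Poly_Mapping.keys (p i) \<subseteq> V (i - 1)"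
    proof -
      have "ns (i - 1 - 1) \<le> ns (i - 1)" "ns (i - 1) \<le> ns i" using mono[of "i - 1 - 1" "i - 1"] mono[of "i - 1" i] i by auto
      then show "Poly_Mapping.keys (p i) \<subseteq> V i" "Poly_Mapping.keys (p i) \<subseteq> V (i - 1)"
        by (auto simp: p_def V_def)
    qed
    moreover have "mdeg (p i) = m" by (simp add: p_def mdeg_single)
    ultimately show ?thesis by (simp add: Si_def)
  qed
  have pinj: "p i \<noteq> p j" if "i \<in> {1..l}" "j \<in> {1..l}" "i < j" for i j
  proof
    assume "p i = p j"
    then have "Poly_Mapping.keys (p i) = Poly_Mapping.keys (p j)" by simp
    then have "ns (i - 1) = ns (j - 1)" using mne by (simp add: p_def)
    moreover have "ns (i - 1) < ns (j - 1)" using smono[of "i - 1" "j - 1"] that by simp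
    ultimately show False by simp
  qed
  define T where "T i = (if i = 1 then Si i else Si i - {p i})" for i
  have D2: "(\<Union>i\<in>{1..l}. T i) = (\<Union>i\<in>{1..l}. Si i)"
  proof
    show "(\<Union>i\<in>{1..l}. T i) \<subseteq> (\<Union>i\<in>{1..l}. Si i)" by (auto simp: T_def)
  next
    show "(\<Union>i\<in>{1..l}. Si i) \<subseteq> (\<Union>i\<in>{1..l}. T i)"
    proof
      fix \<alpha> assume "\<alpha> \<in> (\<Union>i\<in>{1..l}. Si i)"
      then obtain k where k: "k \<in> {1..l}" "\<alpha> \<in> Si k" by blast
      show "\<alpha> \<in> (\<Union>i\<in>{1..l}. T i)"
      proof (cases "k = 1 \<or> \<alpha> \<noteq> p k")
        case True then show ?thesis using k by (auto simp: T_def)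
      next
        case False
        then have ak: "\<alpha> = p k" "k \<in> {2..l}" using k by auto
        then have "\<alpha> \<in> Si (k - 1)" using pin by blast
        moreover have "k - 1 \<in> {1..l}" using ak by auto
        moreover have "p (k - 1) \<noteq> p k" using ak by (intro pinj) auto
        then have "k - 1 = 1 \<or> \<alpha> \<noteq> p (k - 1)" using ak by auto
        ultimately have "\<alpha> \<in> T (k - 1)" by (auto simp: T_def)
        then show ?thesis using \<open>k - 1 \<in> {1..l}\<close> by blast
      qed
    qed
  qed
  have D3: "T i \<inter> T j = {}" if ij: "i \<in> {1..l}" "j \<in> {1..l}" "i < j" for i j
  proof (rule ccontr)
    assume "T i \<inter> T j \<noteq> {}"
    then obtain \<alpha> where a0: "\<alpha> \<in> T i" "\<alpha> \<in> T j" by blast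
    have "j \<noteq> 1" using ij by auto
    then have a: "\<alpha> \<in> Si i" "\<alpha> \<in> Si j" "\<alpha> \<noteq> p j" using a0 by (auto simp: T_def split: if_splits)
    then have ks: "Poly_Mapping.keys \<alpha> \<subseteq> V i" "Poly_Mapping.keys \<alpha> \<subseteq> V j" "mdeg \<alpha> = m" by (auto simp: Si_def)
    have kk: "Poly_Mapping.keys \<alpha> \<subseteq> {ns (j - 1)}"
    proof
      fix x assume x: "x \<in> Poly_Mapping.keys \<alpha>"
      then have "ns (j - 1) \<le> x" "x \<le> ns i" using ks by (auto simp: V_def)
      moreover have "ns i \<le> ns (j - 1)" using mono[of i "j - 1"] ij by simp
      ultimately show "x \<in> {ns (j - 1)}" by simp
    qed
    then have "\<alpha> = p j" using keys_sub_single_mdeg[OF kk ks(3)] by (simp add: p_def)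
    then show False using a(3) by simp
  qed
  have finT: "finite (T i)" for i using finS[of i] by (auto simp: T_def)
  have WS1: "W S = (\<Sum>i=1..l. W (T i))"
    unfolding D1 D2[symmetric] W_def
  proof (rule sum.UNION_disjoint)
    show "finite {1..l}" by simp
    show "\<forall>i\<in>{1..l}. finite (T i)" using finT by simp
    show "\<forall>i\<in>{1..l}. \<forall>j\<in>{1..l}. i \<noteq> j \<longrightarrow> T i \<inter> T j = {}"
      using D3 by (metis Int_commute linorder_neqE_nat)
  qed
  have WT: "W (T i) = W (Si i) - (if i = 1 then 0 else int m * r (ns (i - 1)))" if i: "i \<in> {1..l}" for i
  proof (cases "i = 1")
    case True then show ?thesis by (simp add: T_def)
  next
    case False
    then have "i \<in> {2..l}" using i by auto
    then have "p i \<in> Si i" using pin by blast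
    then have "W (Si i) = wt r (p i) + W (Si i - {p i})"
      unfolding W_def by (rule sum.remove[OF finS])
    then show ?thesis using False by (simp add: T_def wt_single p_def)
  qed
  have WS: "W S = (\<Sum>i=1..l. W (Si i)) - int m * (\<Sum>i=1..l - 1. r (ns i))"
  proof -
    have "W S = (\<Sum>i=1..l. W (Si i) - (if i = 1 then 0 else int m * r (ns (i - 1))))"
      unfolding WS1 by (rule sum.cong) (use WT in auto)
    also have "\<dots> = (\<Sum>i=1..l. W (Si i)) - (\<Sum>i=1..l. if i = 1 then 0 else int m * r (ns (i - 1)))"
      by (simp add: sum_subtractf)
    also have "(\<Sum>i=1..l. if i = 1 then 0 else int m * r (ns (i - 1))) = (\<Sum>i=1..l - 1. int m * r (ns i))"
      by (rule shift_sum)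
    finally show ?thesis by (simp add: sum_distrib_left)
  qed
  define B where "B = of_nat m * poly P (of_nat m) / of_nat (n + 1) * of_int (\<Sum>i=0..n. r i)"
  define A where "A i = of_nat m * poly (Ps i) (of_nat m) / of_nat (ns i - ns (i - 1) + 1) * of_int (\<Sum>k=ns (i - 1)..ns i. r k)" for i
  have hX: "hm_index {0..n} IX P r lt m = - of_int (W S) + B"
    by (simp add: hm_index_def S_def W_def of_int_sum B_def)
  have hi: "hm_index (V i) (I i) (Ps i) r lt m = - of_int (W (Si i)) + A i" if i: "i \<in> {1..l}" for i
  proof -
    have "card (V i) = ns i - ns (i - 1) + 1" using mono[of "i - 1" i] i by (simp add: V_def)
    then show ?thesis by (simp add: hm_index_def Si_def W_def of_int_sum A_def V_def)
  qed
  have main: "hm_index {0..n} IX P r lt m = (\<Sum>i=1..l. hm_index (V i) (I i) (Ps i) r lt m)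
       - (\<Sum>i=1..l. A i) + B + of_nat m * of_int (\<Sum>i=1..l - 1. r (ns i))"
  proof -
    have "(\<Sum>i=1..l. hm_index (V i) (I i) (Ps i) r lt m) = (\<Sum>i=1..l. - of_int (W (Si i)) + A i)"
      by (rule sum.cong) (use hi in auto)
    then show ?thesis unfolding hX WS
      by (simp add: sum.distrib sum_subtractf of_int_sum)
  qed
  show ?thesis using main unfolding IX_def I_def V_def A_def B_def .
qed


end
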